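(* Let $a,b\in\mathbb{C}$ with $a,b,a+b\notin\{0,-1\}$, and suppose $a\ne b$, $a\ne1$, $b\ne1$. Then $R_{a,b}$ has rank $6$ as a module over $\mathbb{C}[P_2,P_3]$.
   Context: For $a,b\in\mathbb{C}$, let $P_i=ax^i+by^i+(-ax-by)^i\in\mathbb{C}[x,y]$ for $i\ge2$, and let $R_{a,b}$ be the subalgebra of $\mathbb{C}[x,y]$ generated by the $P_i$, $i\ge2$. *)

theory Defs
  imports "HOL-Computational_Algebra.Polynomial"
begin

text \<open>The polynomial ring C[x,y] is represented as (C[x])[y], i.e. the type
  complex poly poly: the outer polynomial variable is y, the inner one is x.\<close>

definition cst :: "complex \<Rightarrow> complex poly poly" where
  "cst c = [:[:c:]:]"

definition varX :: "complex poly poly" where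
  "varX = [:[:0, 1:]:]"

definition varY :: "complex poly poly" where
  "varY = [:0, 1:]"

definition Pgen :: "complex \<Rightarrow> complex \<Rightarrow> nat \<Rightarrow> complex poly poly" where
  "Pgen a b i = cst a * varX ^ i + cst b * varY ^ i + (- (cst a * varX) - cst b * varY) ^ i"

inductive_set subalg :: "complex poly poly set \<Rightarrow> complex poly poly set"
  for G :: "complex poly poly set" where
  const: "cst c \<in> subalg G"
| gen: "g \<in> G \<Longrightarrow> g \<in> subalg G"
| add: "p \<in> subalg G \<Longrightarrow> q \<in> subalg G \<Longrightarrow> p + q \<in> subalg G"
| mult: "p \<in> subalg G \<Longrightarrow> q \<in> subalg G \<Longrightarrow> p * q \<in> subalg G"

definition R_ab :: "complex \<Rightarrow> complex \<Rightarrow> complex poly poly set" where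
  "R_ab a b = subalg {Pgen a b i | i. i \<ge> 2}"

definition A_ab :: "complex \<Rightarrow> complex \<Rightarrow> complex poly poly set" where
  "A_ab a b = subalg {Pgen a b 2, Pgen a b 3}"

definition lin_indep_over :: "complex poly poly set \<Rightarrow> complex poly poly list \<Rightarrow> bool" where
  "lin_indep_over A vs \<longleftrightarrow>
     (\<forall>cs. length cs = length vs \<longrightarrow> set cs \<subseteq> A \<longrightarrow>
        (\<Sum>i<length vs. cs ! i * vs ! i) = 0 \<longrightarrow> (\<forall>c\<in>set cs. c = 0))"

definition has_rank_over :: "complex poly poly set \<Rightarrow> complex poly poly set \<Rightarrow> nat \<Rightarrow> bool" where
  "has_rank_over A M n \<longleftrightarrow>
     (\<exists>vs. length vs = n \<and> set vs \<subseteq> M \<and> lin_indep_over A vs) \<and>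
     (\<forall>vs. set vs \<subseteq> M \<longrightarrow> lin_indep_over A vs \<longrightarrow> length vs \<le> n)"

end

theory Submission
  imports Defs Complex_Main
begin

lemma cst_0[simp]: "cst 0 = 0" by (simp add: cst_def)
lemma cst_1[simp]: "cst 1 = 1" by (simp add: cst_def one_pCons)
lemma cst_add: "cst (c + d) = cst c + cst d" by (simp add: cst_def)
lemma cst_mult: "cst (c * d) = cst c * cst d" by (simp add: cst_def)
lemma cst_sum: "cst (sum f A) = (\<Sum>x\<in>A. cst (f x))"
  by (induct A rule: infinite_finite_induct) (simp_all add: cst_add)

lemma map_poly_add_hom:
  assumes "f 0 = 0" "\<And>x y. f (x + y) = f x + f y"
  shows "map_poly f (p + q) = map_poly f p + map_poly f q"
  by (intro poly_eqI) (simp add: coeff_map_poly assms)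

lemma map_poly_mult_hom:
  fixes f :: "'a::comm_semiring_1 \<Rightarrow> 'b::comm_semiring_1"
  assumes "f 0 = 0" "\<And>x y. f (x + y) = f x + f y" "\<And>x y. f (x * y) = f x * f y"
  shows "map_poly f (p * q) = map_poly f p * map_poly f q"
proof (intro poly_eqI)
  fix n
  have fs: "f (sum g A) = (\<Sum>x\<in>A. f (g x))" for g :: "nat \<Rightarrow> 'a" and A
    by (induct A rule: infinite_finite_induct) (simp_all add: assms)
  show "coeff (map_poly f (p * q)) n = coeff (map_poly f p * map_poly f q) n"
    by (simp add: coeff_map_poly assms coeff_mult fs)
qed

definition evY :: "complex poly poly \<Rightarrow> complex poly \<Rightarrow> complex poly poly" where
  "evY P g = poly (map_poly cst g) P"

lemma evY_add: "evY P (g + h) = evY P g + evY P h"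
  by (simp add: evY_def map_poly_add_hom cst_add)
lemma evY_mult: "evY P (g * h) = evY P g * evY P h"
  by (simp add: evY_def map_poly_mult_hom cst_add cst_mult)
lemma evY_0[simp]: "evY P 0 = 0" by (simp add: evY_def)
lemma evY_const[simp]: "evY P [:c:] = cst c"
  by (simp add: evY_def map_poly_pCons)
lemma evY_pCons: "evY P (pCons c g) = cst c + P * evY P g"
  by (simp add: evY_def map_poly_pCons)
lemma evY_X: "evY P [:0,1:] = P"
  by (simp add: evY_def map_poly_pCons)

definition ev :: "complex poly poly \<Rightarrow> complex poly poly \<Rightarrow> complex poly poly \<Rightarrow> complex poly poly" where
  "ev Q P F = poly (map_poly (evY P) F) Q"

lemma ev_add: "ev Q P (F + G) = ev Q P F + ev Q P G"
  by (simp add: ev_def map_poly_add_hom evY_add)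
lemma ev_mult: "ev Q P (F * G) = ev Q P F * ev Q P G"
  by (simp add: ev_def map_poly_mult_hom evY_add evY_mult)
lemma ev_0[simp]: "ev Q P 0 = 0" by (simp add: ev_def)
lemma ev_pCons: "ev Q P (pCons g F) = evY P g + Q * ev Q P F"
  by (simp add: ev_def map_poly_pCons)
lemma ev_const: "ev Q P [:g:] = evY P g"
  by (simp add: ev_pCons)

definition Ev :: "complex \<Rightarrow> complex poly poly \<Rightarrow> complex poly" where
  "Ev l f = poly f [:0, l:]"

lemma Ev_add: "Ev l (f + g) = Ev l f + Ev l g" by (simp add: Ev_def)
lemma Ev_mult: "Ev l (f * g) = Ev l f * Ev l g" by (simp add: Ev_def)
lemma Ev_0[simp]: "Ev l 0 = 0" by (simp add: Ev_def)
lemma Ev_cst[simp]: "Ev l (cst c) = [:c:]" by (simp add: Ev_def cst_def)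

lemma Ev_evY: "Ev l (evY P g) = pcompose g (Ev l P)"
  by (induct g) (simp_all add: evY_pCons pcompose_pCons Ev_add Ev_mult)

definition rho :: "complex \<Rightarrow> complex \<Rightarrow> complex poly poly \<Rightarrow> complex poly" where
  "rho s l f = pcompose (Ev l f) [:0, s:]"

lemma rho_add: "rho s l (f + g) = rho s l f + rho s l g"
  by (simp add: rho_def Ev_add pcompose_add)
lemma rho_mult: "rho s l (f * g) = rho s l f * rho s l g"
  by (simp add: rho_def Ev_mult pcompose_mult)
lemma rho_cst[simp]: "rho s l (cst c) = [:c:]" by (simp add: rho_def)
lemma rho_evY: "rho s l (evY P g) = pcompose g (rho s l P)"
  by (simp add: rho_def Ev_evY pcompose_assoc)

definition sig :: "complex \<Rightarrow> complex \<Rightarrow> complex \<Rightarrow> nat \<Rightarrow> complex" where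
  "sig a b l i = a + b * l ^ i + (- a - b * l) ^ i"

lemma sig_rec:
  fixes a b l :: complex
  defines "m \<equiv> - a - b * l"
  defines "e1 \<equiv> 1 + l + m" and "e2 \<equiv> l + m + l * m" and "e3 \<equiv> l * m"
  shows "sig a b l (n + 3) = e1 * sig a b l (n + 2) - e2 * sig a b l (n + 1) + e3 * sig a b l n"
proof -
  have t: "t ^ (n + 3) = e1 * t ^ (n + 2) - e2 * t ^ (n + 1) + e3 * t ^ n"
    if "(t - 1) * (t - l) * (t - m) = 0" for t :: complex
  proof -
    have "t ^ (n + 3) - (e1 * t ^ (n + 2) - e2 * t ^ (n + 1) + e3 * t ^ n)
        = t ^ n * ((t - 1) * (t - l) * (t - m))"
      unfolding e1_def e2_def e3_def by (simp add: power_add algebra_simps power2_eq_square power3_eq_cube)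
    also have "\<dots> = 0" by (simp only: that mult_zero_right)
    finally show ?thesis by simp
  qed
  have "sig a b l (n + 3) = a * 1 ^ (n + 3) + b * l ^ (n + 3) + m ^ (n + 3)"
    by (simp add: sig_def m_def)
  also have "\<dots> = a * (e1 * 1 ^ (n + 2) - e2 * 1 ^ (n + 1) + e3 * 1 ^ n)
     + b * (e1 * l ^ (n + 2) - e2 * l ^ (n + 1) + e3 * l ^ n)
     + (e1 * m ^ (n + 2) - e2 * m ^ (n + 1) + e3 * m ^ n)"
    using t[of 1] t[of l] t[of m] by simp
  also have "\<dots> = e1 * sig a b l (n + 2) - e2 * sig a b l (n + 1) + e3 * sig a b l n"
    by (simp add: sig_def m_def[symmetric] algebra_simps)
  finally show ?thesis .
qed

context
  fixes a b :: complex
  assumes ha: "a \<notin> {0, -1}" and hb: "b \<notin> {0, -1}" and hab: "a + b \<notin> {0, -1}"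
    and hne: "a \<noteq> b" and ha1: "a \<noteq> 1" and hb1: "b \<noteq> 1"
begin

lemma sig_vals:
  fixes l :: complex
  defines "m \<equiv> - a - b * l"
  defines "e1 \<equiv> 1 + l + m" and "e2 \<equiv> l + m + l * m" and "e3 \<equiv> l * m"
  defines "s0 \<equiv> a + b + 1"
  assumes q: "sig a b l 2 = 0"
  shows "sig a b l 3 = e3 * s0"
    and "sig a b l 4 = e1 * e3 * s0"
    and "sig a b l 6 = (e1^3 - 2 * e1 * e2 + e3) * e3 * s0"
    and "sig a b l 7 = (e1^4 - 3 * e1^2 * e2 + 2 * e1 * e3 + e2^2) * e3 * s0"
proof -
  have r: "\<And>n. sig a b l (n + 3) = e1 * sig a b l (n + 2) - e2 * sig a b l (n + 1) + e3 * sig a b l n"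
    unfolding e1_def e2_def e3_def m_def by (rule sig_rec)
  have s0: "sig a b l 0 = s0" by (simp add: sig_def s0_def)
  have s1: "sig a b l 1 = 0" by (simp add: sig_def)
  have r0: "sig a b l 3 = e1 * sig a b l 2 - e2 * sig a b l 1 + e3 * sig a b l 0"
    using r[of 0] by (simp add: eval_nat_numeral)
  have r1: "sig a b l 4 = e1 * sig a b l 3 - e2 * sig a b l 2 + e3 * sig a b l 1"
    using r[of 1] by (simp add: eval_nat_numeral)
  have r2: "sig a b l 5 = e1 * sig a b l 4 - e2 * sig a b l 3 + e3 * sig a b l 2"
    using r[of 2] by (simp add: eval_nat_numeral)
  have r3: "sig a b l 6 = e1 * sig a b l 5 - e2 * sig a b l 4 + e3 * sig a b l 3"
    using r[of 3] by (simp add: eval_nat_numeral)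
  have r4: "sig a b l 7 = e1 * sig a b l 6 - e2 * sig a b l 5 + e3 * sig a b l 4"
    using r[of 4] by (simp add: eval_nat_numeral)
  have 3: "sig a b l 3 = e3 * s0" using r0 q s0 s1 by simp
  have 4: "sig a b l 4 = e1 * e3 * s0" using r1 q s1 3 by simp
  have 5: "sig a b l 5 = (e1^2 - e2) * e3 * s0" using r2 q 3 4
    by (simp add: algebra_simps power2_eq_square)
  have 6: "sig a b l 6 = (e1^3 - 2 * e1 * e2 + e3) * e3 * s0" using r3 3 4 5
    by (simp add: algebra_simps power2_eq_square power3_eq_cube)
  have 7: "sig a b l 7 = (e1^4 - 3 * e1^2 * e2 + 2 * e1 * e3 + e2^2) * e3 * s0" using r4 4 5 6
    by (simp add: algebra_simps power2_eq_square power3_eq_cube power4_eq_xxxx)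
  show "sig a b l 3 = e3 * s0" "sig a b l 4 = e1 * e3 * s0"
    "sig a b l 6 = (e1^3 - 2 * e1 * e2 + e3) * e3 * s0"
    "sig a b l 7 = (e1^4 - 3 * e1^2 * e2 + 2 * e1 * e3 + e2^2) * e3 * s0"
    using 3 4 6 7 by simp_all
qed

lemma sig3_nz:
  assumes q: "sig a b l 2 = 0"
  shows "sig a b l 3 \<noteq> 0"
proof -
  have s0: "a + b + 1 \<noteq> 0"
  proof
    assume "a + b + 1 = 0"
    hence "a + b = -1" by (simp add: eq_neg_iff_add_eq_0)
    with hab show False by simp
  qed
  have l0: "l \<noteq> 0"
  proof
    assume "l = 0"
    with q have "a * (1 + a) = 0" by (simp add: sig_def power2_eq_square algebra_simps)
    with ha show False by (auto simp: add_eq_0_iff)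
  qed
  have m0: "- a - b * l \<noteq> 0"
  proof
    assume m: "- a - b * l = 0"
    hence am: "a = - (b * l)" by algebra
    with q have "a * (1 - l) = 0" by (simp add: sig_def power2_eq_square algebra_simps)
    with ha have "l = 1" by auto
    with am hab show False by auto
  qed
  show ?thesis using sig_vals(1)[OF q] s0 l0 m0 by simp
qed

lemma s0_nz: "a + b + 1 \<noteq> 0"
proof
  assume "a + b + 1 = 0"
  hence "a + b = -1" by (simp add: eq_neg_iff_add_eq_0)
  with hab show False by simp
qed

lemma cq_nz: "b + b^2 \<noteq> 0"
proof
  assume "b + b^2 = 0"
  hence "b * (1 + b) = 0" by (simp add: power2_eq_square algebra_simps)
  with hb show False by (auto simp: add_eq_0_iff)
qed

lemma sig2_eq: "sig a b l 2 = (b + b^2) * l^2 + 2 * a * b * l + (a + a^2)"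
  by (simp add: sig_def power2_eq_square algebra_simps)

lemma roots: "\<exists>l1 l2. l1 \<noteq> l2 \<and> sig a b l1 2 = 0 \<and> sig a b l2 2 = 0 \<and>
   (b + b^2) * (l1 + l2) = - 2 * a * b \<and> (b + b^2) * (l1 * l2) = a + a^2"
proof -
  define cq where "cq = b + b^2"
  define D where "D = a^2 * b^2 - cq * (a + a^2)"
  define r where "r = csqrt D"
  have r2: "r^2 = D" by (simp add: r_def)
  have D: "D = - (a * b * (a + b + 1))" by (simp add: D_def cq_def power2_eq_square algebra_simps)
  have "D \<noteq> 0" using D ha hb s0_nz by auto
  hence r0: "r \<noteq> 0" using r2 by auto
  have cq0: "cq \<noteq> 0" using cq_nz by (simp add: cq_def)
  define l1 where "l1 = (- a * b + r) / cq"
  define l2 where "l2 = (- a * b - r) / cq"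
  have "l1 \<noteq> l2" using r0 cq0 by (auto simp: l1_def l2_def divide_simps)
  have key: "cq * ((b + b^2) * l^2 + 2 * a * b * l + (a + a^2)) = 0" if "cq * l + a * b = r \<or> cq * l + a * b = - r" for l
  proof -
    from that have z: "(cq * l + a * b)^2 = r^2" by (auto simp: power2_eq_square)
    have "cq * ((b + b^2) * l^2 + 2 * a * b * l + (a + a^2)) = (cq * l + a * b)^2 - a^2 * b^2 + cq * (a + a^2)"
      by (simp add: cq_def power2_eq_square algebra_simps)
    also have "\<dots> = 0" by (simp add: z r2 D_def)
    finally show ?thesis .
  qed
  have "cq * l1 = - a * b + r" "cq * l2 = - a * b - r" using cq0 by (simp_all add: l1_def l2_def)
  have "cq * l1 + a * b = r" "cq * l2 + a * b = - r" using cq0 by (simp_all add: l1_def l2_def)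
  hence "sig a b l1 2 = 0" "sig a b l2 2 = 0" using key[of l1] key[of l2] cq0 by (simp_all add: sig2_eq)
  moreover have "(b + b^2) * (l1 + l2) = - 2 * a * b"
    using cq0 by (simp add: l1_def l2_def cq_def[symmetric] field_simps)
  moreover have "(b + b^2) * (l1 * l2) = a + a^2"
  proof -
    have "cq * (cq * (l1 * l2)) = (cq * l1) * (cq * l2)" by (simp add: algebra_simps)
    also have "\<dots> = (r - a * b) * (- r - a * b)" using \<open>cq * l1 = - a * b + r\<close> \<open>cq * l2 = - a * b - r\<close>
      by simp
    also have "\<dots> = a^2 * b^2 - r^2" by (simp add: power2_eq_square algebra_simps)
    also have "\<dots> = cq * (a + a^2)" by (simp add: r2 D_def)
    finally show ?thesis using cq0 by (simp add: cq_def)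
  qed
  moreover note \<open>l1 \<noteq> l2\<close>
  ultimately show ?thesis by blast
qed

lemma sig7_nz:
  assumes q: "sig a b l 2 = 0" and s4: "sig a b l 4 = 0"
  shows "sig a b l 7 \<noteq> 0"
proof -
  define m where "m = - a - b * l"
  define e1 where "e1 = 1 + l + m"
  define e2 where "e2 = l + m + l * m"
  define e3 where "e3 = l * m"
  have nz: "e3 * (a + b + 1) \<noteq> 0" using sig3_nz[OF q] sig_vals(1)[OF q]
    by (simp add: e3_def m_def)
  have "e1 * (e3 * (a + b + 1)) = 0" using s4 sig_vals(2)[OF q] by (simp add: e1_def e3_def m_def algebra_simps)
  hence e1: "e1 = 0" using nz by simp
  have "e2 \<noteq> 0"
  proof
    assume e2: "e2 = 0"
    have "m = - 1 - l + e1" by (simp add: e1_def)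
    hence mm: "m = - 1 - l" using e1 by simp
    have "a = - m - b * l" by (simp add: m_def)
    hence aa: "a = 1 + l - b * l" using mm by simp
    have "l + (- 1 - l) + l * (- 1 - l) = 0" using e2 unfolding e2_def mm .
    moreover have "l^2 = - 1 - l - (l + (- 1 - l) + l * (- 1 - l))" by (simp add: power2_eq_square algebra_simps)
    ultimately have ll: "l^2 = - 1 - l" by simp
    have "0 = a + b * l^2 + m^2" using q by (simp add: sig_def m_def)
    also have "\<dots> = (1 + l - b * l) + b * (- 1 - l) + (1 + l)^2" unfolding aa ll mm by (simp add: power2_eq_square algebra_simps)
    also have "(1 + l)^2 = 1 + 2 * l + l^2" by (simp add: power2_eq_square algebra_simps)
    also have "(1 + l - b * l) + b * (- 1 - l) + (1 + 2 * l + l^2) = (1 - b) * (1 + 2 * l)"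
      unfolding ll by (simp add: algebra_simps)
    finally have "(1 - b) * (1 + 2 * l) = 0" by simp
    moreover have "1 - b \<noteq> 0" using hb1 by simp
    ultimately have "1 + 2 * l = 0" by simp
    moreover have "l = (1 + 2 * l) / 2 - 1 / 2" by (simp add: field_simps)
    ultimately have "l = - 1 / 2" by simp
    with ll have False by (simp add: power2_eq_square)
    thus False .
  qed
  moreover have "sig a b l 7 = (e1^4 - 3 * e1^2 * e2 + 2 * e1 * e3 + e2^2) * e3 * (a + b + 1)"
    using sig_vals(4)[OF q] by (simp add: e1_def e2_def e3_def m_def)
  ultimately show ?thesis using e1 nz by simp
qed

lemma sig4_not_both:
  assumes "l1 \<noteq> l2" "sig a b l1 2 = 0" "sig a b l2 2 = 0"
  shows "sig a b l1 4 \<noteq> 0 \<or> sig a b l2 4 \<noteq> 0"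
proof (rule ccontr)
  assume "\<not> ?thesis"
  hence z: "sig a b l1 4 = 0" "sig a b l2 4 = 0" by auto
  have "1 + l1 + (- a - b * l1) = 0"
    using z(1) sig_vals(2)[OF assms(2)] sig3_nz[OF assms(2)] sig_vals(1)[OF assms(2)] by auto
  moreover have "1 + l2 + (- a - b * l2) = 0"
    using z(2) sig_vals(2)[OF assms(3)] sig3_nz[OF assms(3)] sig_vals(1)[OF assms(3)] by auto
  ultimately have "(1 + l1 + (- a - b * l1)) - (1 + l2 + (- a - b * l2)) = 0" by simp
  hence "(1 - b) * (l1 - l2) = 0" by (simp add: algebra_simps)
  thus False using assms(1) hb1 by simp
qed

definition Gf :: "complex \<Rightarrow> complex \<Rightarrow> complex" where
  "Gf S P = (1 - a) * (1 + a^2) * (a + b * S) + (b - b^2 - a + a * b^2 + a^2 - a^2 * b) * P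
     - (1 - b) * (1 + b^2) * (a * P * S + b * P^2)"

lemma sig6_distinct:
  assumes ne: "l1 \<noteq> l2" and q1: "sig a b l1 2 = 0" and q2: "sig a b l2 2 = 0"
    and vs: "(b + b^2) * (l1 + l2) = - 2 * a * b" and vp: "(b + b^2) * (l1 * l2) = a + a^2"
  shows "sig a b l1 6 * (sig a b l2 3)^2 \<noteq> sig a b l2 6 * (sig a b l1 3)^2"
proof -
  define m1 where "m1 = - a - b * l1"
  define m2 where "m2 = - a - b * l2"
  define e11 where "e11 = 1 + l1 + m1"
  define e21 where "e21 = l1 + m1 + l1 * m1"
  define e31 where "e31 = l1 * m1"
  define e12 where "e12 = 1 + l2 + m2"
  define e22 where "e22 = l2 + m2 + l2 * m2"
  define e32 where "e32 = l2 * m2"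
  define s0 where "s0 = a + b + 1"
  define N1 where "N1 = e11^3 - 2 * e11 * e21 + e31"
  define N2 where "N2 = e12^3 - 2 * e12 * e22 + e32"
  have nz1: "e31 * s0 \<noteq> 0" using sig3_nz[OF q1] sig_vals(1)[OF q1] by (simp add: e31_def m1_def s0_def)
  have nz2: "e32 * s0 \<noteq> 0" using sig3_nz[OF q2] sig_vals(1)[OF q2] by (simp add: e32_def m2_def s0_def)
  have v13: "sig a b l1 3 = e31 * s0" using sig_vals(1)[OF q1] by (simp add: e31_def m1_def s0_def)
  have v23: "sig a b l2 3 = e32 * s0" using sig_vals(1)[OF q2] by (simp add: e32_def m2_def s0_def)
  have v16: "sig a b l1 6 = N1 * e31 * s0" using sig_vals(3)[OF q1]
    by (simp add: N1_def e11_def e21_def e31_def m1_def s0_def)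
  have v26: "sig a b l2 6 = N2 * e32 * s0" using sig_vals(3)[OF q2]
    by (simp add: N2_def e12_def e22_def e32_def m2_def s0_def)
  have diff: "sig a b l1 6 * (sig a b l2 3)^2 - sig a b l2 6 * (sig a b l1 3)^2
      = s0^3 * e31 * e32 * (N1 * e32 - N2 * e31)"
    unfolding v13 v23 v16 v26 by (simp add: power2_eq_square power3_eq_cube algebra_simps)
  have NG: "N1 * e32 - N2 * e31 = (l1 - l2) * Gf (l1 + l2) (l1 * l2)"
    unfolding N1_def N2_def e11_def e21_def e31_def e12_def e22_def e32_def m1_def m2_def Gf_def
    by (simp add: algebra_simps power2_eq_square power3_eq_cube)
  have GG: "(b + b^2)^2 * Gf (l1 + l2) (l1 * l2) = - 2 * a * b * (a + b + 1) * (a - b) * (a - 1) * (b - 1)"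
  proof -
    define bb where "bb = b + b^2"
    define S where "S = l1 + l2"
    define P where "P = l1 * l2"
    have vs': "bb * S = - 2 * a * b" and vp': "bb * P = a + a^2" using vs vp by (simp_all add: bb_def S_def P_def)
    have "bb^2 * Gf S P =
      (1 - a) * (1 + a^2) * (a * bb^2 + b * (bb * S) * bb) + (b - b^2 - a + a * b^2 + a^2 - a^2 * b) * (bb * P) * bb
       - (1 - b) * (1 + b^2) * (a * (bb * P) * (bb * S) + b * (bb * P)^2)"
      by (simp add: Gf_def algebra_simps power2_eq_square)
    also have "\<dots> = (1 - a) * (1 + a^2) * (a * bb^2 + b * (- 2 * a * b) * bb) + (b - b^2 - a + a * b^2 + a^2 - a^2 * b) * (a + a^2) * bb
       - (1 - b) * (1 + b^2) * (a * (a + a^2) * (- 2 * a * b) + b * (a + a^2)^2)"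
      by (simp only: vs' vp')
    also have "\<dots> = - 2 * a * b * (a + b + 1) * (a - b) * (a - 1) * (b - 1)"
      unfolding bb_def by (simp add: algebra_simps power2_eq_square power3_eq_cube)
    finally show ?thesis by (simp add: bb_def S_def P_def)
  qed
  have "Gf (l1 + l2) (l1 * l2) \<noteq> 0"
  proof
    assume "Gf (l1 + l2) (l1 * l2) = 0"
    with GG have "a * b * (a + b + 1) * (a - b) * (a - 1) * (b - 1) = 0" by simp
    thus False using ha hb s0_nz hne ha1 hb1 by auto
  qed
  hence "N1 * e32 - N2 * e31 \<noteq> 0" using NG ne by simp
  hence "s0^3 * e31 * e32 * (N1 * e32 - N2 * e31) \<noteq> 0" using nz1 nz2 by simp
  with diff show ?thesis by auto
qed

end

lemma X_monom: "[:0, c:] = monom c 1"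
  by (simp add: One_nat_def monom_Suc monom_0)

lemma X_power: "[:0, c:] ^ i = monom (c ^ i) i"
  by (simp add: X_monom monom_power)

lemma Ev_power: "Ev l (f ^ n) = Ev l f ^ n" by (simp add: Ev_def)
lemma Ev_diff: "Ev l (f - g) = Ev l f - Ev l g" by (simp add: Ev_def)
lemma Ev_uminus: "Ev l (- f) = - Ev l f" by (simp add: Ev_def)

lemma Ev_Pgen: "Ev l (Pgen a b i) = monom (sig a b l i) i"
proof -
  have x: "Ev l varX = [:0, 1:]" by (simp add: Ev_def varX_def)
  have y: "Ev l varY = [:0, l:]" by (simp add: Ev_def varY_def)
  have z: "Ev l (- (cst a * varX) - cst b * varY) = [:0, - a - b * l:]"
    by (simp add: Ev_def varX_def varY_def cst_def)
  have "Ev l (Pgen a b i) = [:a:] * [:0, 1:] ^ i + [:b:] * [:0, l:] ^ i + [:0, - a - b * l:] ^ i"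
    unfolding Pgen_def Ev_add Ev_mult Ev_power x y z by simp
  also have "\<dots> = monom (sig a b l i) i"
    by (simp add: X_power smult_monom add_monom sig_def)
  finally show ?thesis .
qed

lemma pcompose_monom_lin: "pcompose (monom c n) [:0, s:] = monom (c * s ^ n) (n::nat)" for c s :: complex
proof (intro poly_eqI)
  fix i
  have "coeff (pcompose (monom c n) [:0, s:]) i = s ^ i * coeff (monom c n) i"
    by (rule coeff_pcompose_linear)
  thus "coeff (pcompose (monom c n) [:0, s:]) i = coeff (monom (c * s ^ n) n) i"
    by (auto simp: coeff_monom)
qed

lemma rho_Pgen: "rho s l (Pgen a b i) = monom (sig a b l i * s ^ i) i"
  by (simp add: rho_def Ev_Pgen pcompose_monom_lin)

lemma rho_power: "rho s l (f ^ n) = rho s l f ^ n"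
  by (induct n) (simp_all add: rho_mult one_pCons[symmetric] cst_1[symmetric] del: cst_1)

lemma rho_0[simp]: "rho s l 0 = 0" by (simp add: rho_def)

lemma rho_sum: "rho s l (sum f A) = (\<Sum>x\<in>A. rho s l (f x))"
  by (induct A rule: infinite_finite_induct) (simp_all add: rho_add)

lemma rho_ev:
  assumes "rho s l P = 0"
  shows "rho s l (ev P Q F) = pcompose (coeff F 0) (rho s l Q)"
proof -
  obtain g G where F: "F = pCons g G" by (cases F)
  show ?thesis unfolding F by (simp add: ev_pCons rho_add rho_mult assms rho_evY)
qed

lemma pcompose_X3_eq_0: "pcompose g (monom 1 3) = 0 \<Longrightarrow> g = (0::complex poly)"
proof -
  assume "pcompose g (monom 1 3) = 0"
  moreover have "degree (monom (1::complex) 3) = 3" by (simp add: degree_monom_eq)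
  ultimately show ?thesis using pcompose_eq_0[of g "monom 1 3"] by simp
qed

lemma P2_nz: "a + a^2 \<noteq> 0 \<Longrightarrow> Pgen a b 2 \<noteq> 0"
proof
  assume "a + a^2 \<noteq> 0" "Pgen a b 2 = 0"
  hence "Ev 0 (Pgen a b 2) = 0" by (simp add: Ev_def)
  hence "sig a b 0 2 = 0" by (simp add: Ev_Pgen)
  thus False using \<open>a + a^2 \<noteq> 0\<close> by (simp add: sig_def power2_eq_square)
qed

lemma ev_inj:
  assumes P: "P \<noteq> 0" and r0: "rho s l P = 0" and rQ: "rho s l Q = monom 1 3"
  shows "ev P Q F = 0 \<Longrightarrow> F = 0"
proof (induct F rule: pCons_induct)
  case 0
  then show ?case by simp
next
  case (pCons g G)
  have "rho s l (ev P Q (pCons g G)) = 0" using pCons.prems by (simp add: rho_def)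
  hence "pcompose g (monom 1 3) = 0" using rho_ev[OF r0, of Q "pCons g G"] rQ by simp
  hence g: "g = 0" by (rule pcompose_X3_eq_0)
  with pCons.prems have "P * ev P Q G = 0" by (simp add: ev_pCons)
  with P have "ev P Q G = 0" by simp
  with pCons.hyps(2) have "G = 0" by simp
  with g show ?case by simp
qed

lemma evY_1[simp]: "evY Q 1 = 1"
  using evY_const[of Q 1] by (simp add: one_pCons)

lemma subalg_range_ev:
  "x \<in> subalg {P, Q} \<Longrightarrow> \<exists>F. x = ev P Q F"
proof (induct rule: subalg.induct)
  case (const c)
  show ?case by (rule exI[of _ "[:[:c:]:]"]) (simp add: ev_const)
next
  case (gen g)
  then consider "g = P" | "g = Q" by auto
  then show ?case
  proof cases
    case 1
    show ?thesis by (rule exI[of _ "[:0, 1:]"]) (simp add: 1 ev_pCons ev_const)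
  next
    case 2
    show ?thesis by (rule exI[of _ "[:[:0, 1:]:]"]) (simp add: 2 ev_const evY_X)
  qed
next
  case (add p q)
  then obtain F G where "p = ev P Q F" "q = ev P Q G" by blast
  thus ?case by (intro exI[of _ "F + G"]) (simp add: ev_add)
next
  case (mult p q)
  then obtain F G where "p = ev P Q F" "q = ev P Q G" by blast
  thus ?case by (intro exI[of _ "F * G"]) (simp add: ev_mult)
qed

lemma coeff_pcompose_X3:
  "coeff (pcompose H (monom (1::complex) 3)) n = (if 3 dvd n then coeff H (n div 3) else 0)"
proof (induct H arbitrary: n)
  case 0
  then show ?case by simp
next
  case (pCons c H)
  have e: "pcompose (pCons c H) (monom 1 3) = [:c:] + monom 1 3 * pcompose H (monom 1 3)"
    by (simp add: pcompose_pCons)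
  show ?case
  proof (cases "n < 3")
    case True
    then show ?thesis unfolding e by (auto simp: coeff_monom_mult dvd_def coeff_pCons split: nat.splits)
  next
    case False
    then obtain m where n: "n = m + 3" by (metis add.commute le_Suc_ex not_less)
    have "3 dvd n \<longleftrightarrow> 3 dvd m" by (simp add: n)
    moreover have "3 dvd m \<Longrightarrow> n div 3 = Suc (m div 3)" by (auto simp: n)
    ultimately show ?thesis unfolding e using pCons(2)[of m]
      by (auto simp: coeff_monom_mult n coeff_pCons split: nat.splits)
  qed
qed

lemma mod3_decomp:
  fixes H0 H1 H2 :: "complex poly"
  assumes "pcompose H0 (monom 1 3) + monom 1 1 * pcompose H1 (monom 1 3)
     + monom 1 2 * pcompose H2 (monom 1 3) = 0"
  shows "H0 = 0 \<and> H1 = 0 \<and> H2 = 0"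
proof -
  let ?S = "pcompose H0 (monom 1 3) + monom 1 1 * pcompose H1 (monom 1 3)
     + monom 1 2 * pcompose H2 (monom 1 3)"
  have c0: "coeff ?S (3 * k) = coeff H0 k" for k
  proof -
    have h1: "k \<noteq> 0 \<Longrightarrow> \<not> 3 dvd (3 * k - Suc 0)" by presburger
    have h2: "k \<noteq> 0 \<Longrightarrow> \<not> 3 dvd (3 * k - 2)" by presburger
    show ?thesis using h1 h2 by (cases "k = 0") (simp_all add: coeff_monom_mult coeff_pcompose_X3 poly_0_coeff_0)
  qed
  have c1: "coeff ?S (3 * k + 1) = coeff H1 k" for k
  proof -
    have h1: "\<not> 3 dvd Suc (3 * k)" "k \<noteq> 0 \<Longrightarrow> \<not> 3 dvd (3 * k - Suc 0)" by presburger+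
    show ?thesis using h1 by (cases "k = 0") (simp_all add: coeff_monom_mult coeff_pcompose_X3 poly_0_coeff_0)
  qed
  have c2: "coeff ?S (3 * k + 2) = coeff H2 k" for k
  proof -
    have h1: "\<not> 3 dvd Suc (Suc (3 * k))" "\<not> 3 dvd Suc (3 * k)" by presburger+
    show ?thesis using h1 by (simp add: coeff_monom_mult coeff_pcompose_X3)
  qed
  show ?thesis using assms c0 c1 c2 by (auto intro!: poly_eqI)
qed

abbreviation X3 :: "complex poly" where "X3 \<equiv> monom 1 3"

lemma pcompose_power': "pcompose (p ^ m) q = (pcompose p q) ^ m" for p q :: "complex poly"
  by (induct m) (simp_all add: pcompose_mult pcompose_1)

lemma pcompose_monom_X3: "pcompose (monom c m) X3 = monom c (3 * m)"
proof -
  have "pcompose (monom c m) X3 = smult c (pcompose ([:0, 1:] ^ m) X3)"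
    by (simp add: monom_altdef pcompose_smult)
  also have "pcompose ([:0, 1:] ^ m) X3 = X3 ^ m"
    by (simp add: pcompose_power' pcompose_pCons)
  finally show ?thesis by (simp add: monom_power smult_monom mult.commute)
qed

lemma termX: "pcompose g X3 * monom c (3 * m + r) = monom 1 r * pcompose (g * monom c m) X3"
proof -
  have "monom 1 r * pcompose (g * monom c m) X3 = monom 1 r * (pcompose g X3 * monom c (3 * m))"
    by (simp add: pcompose_mult pcompose_monom_X3)
  also have "\<dots> = pcompose g X3 * (monom 1 r * monom c (3 * m))" by (simp only: mult.left_commute)
  also have "monom 1 r * monom c (3 * m) = monom c (3 * m + r)" by (simp add: mult_monom add.commute)
  finally show ?thesis by simp
qed

lemma line_split:
  fixes g :: "nat \<Rightarrow> complex poly"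
  assumes d: "d = 3 * t + 1"
  shows "(\<Sum>k<6. pcompose (g k) X3 * monom (w ^ (k div 2) * u ^ (k mod 2)) (d * (k div 2) + 6 * (k mod 2)))
    = pcompose (g 0 + g 1 * monom u 2) X3
      + monom 1 1 * pcompose (g 2 * monom w t + g 3 * monom (w * u) (t + 2)) X3
      + monom 1 2 * pcompose (g 4 * monom (w^2) (2 * t) + g 5 * monom (w^2 * u) (2 * t + 2)) X3"
proof -
  have e: "(\<Sum>k<6. f k) = f 0 + f 1 + f 2 + f 3 + f 4 + f (5::nat)" for f :: "nat \<Rightarrow> complex poly"
    by (simp add: eval_nat_numeral)
  have t0: "pcompose (g 0) X3 * monom (w ^ (0 div 2) * u ^ (0 mod 2)) (d * (0 div 2) + 6 * (0 mod 2))
     = pcompose (g 0) X3" by (simp add: monom_0 one_pCons[symmetric])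
  have t1: "pcompose (g 1) X3 * monom (w ^ (1 div 2) * u ^ (1 mod 2)) (d * (1 div 2) + 6 * (1 mod 2))
     = pcompose (g 1 * monom u 2) X3"
    using termX[of "g 1" u 2 0] by (simp add: pcompose_mult pcompose_monom_X3)
  have t2: "pcompose (g 2) X3 * monom (w ^ (2 div 2) * u ^ (2 mod 2)) (d * (2 div 2) + 6 * (2 mod 2))
     = monom 1 1 * pcompose (g 2 * monom w t) X3"
    using termX[of "g 2" w t 1] by (simp add: d)
  have t3: "pcompose (g 3) X3 * monom (w ^ (3 div 2) * u ^ (3 mod 2)) (d * (3 div 2) + 6 * (3 mod 2))
     = monom 1 1 * pcompose (g 3 * monom (w * u) (t + 2)) X3"
    using termX[of "g 3" "w * u" "t + 2" 1] by (simp add: d algebra_simps)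
  have t4: "pcompose (g 4) X3 * monom (w ^ (4 div 2) * u ^ (4 mod 2)) (d * (4 div 2) + 6 * (4 mod 2))
     = monom 1 2 * pcompose (g 4 * monom (w^2) (2 * t)) X3"
    using termX[of "g 4" "w^2" "2 * t" 2] by (simp add: d algebra_simps)
  have t5: "pcompose (g 5) X3 * monom (w ^ (5 div 2) * u ^ (5 mod 2)) (d * (5 div 2) + 6 * (5 mod 2))
     = monom 1 2 * pcompose (g 5 * monom (w^2 * u) (2 * t + 2)) X3"
    using termX[of "g 5" "w^2 * u" "2 * t + 2" 2] by (simp add: d algebra_simps)
  show ?thesis
    unfolding e t0 t1 t2 t3 t4 t5 by (simp add: pcompose_add distrib_left)
qed

lemma pair_zero:
  fixes g h :: "complex poly"
  assumes "g + h * monom u1 2 = 0" "g + h * monom u2 2 = 0" "u1 \<noteq> u2"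
  shows "g = 0 \<and> h = 0"
proof -
  have "h * (monom u1 2 - monom u2 2) = (g + h * monom u1 2) - (g + h * monom u2 2)"
    by (simp add: algebra_simps)
  hence "h * (monom u1 2 - monom u2 2) = 0" using assms(1,2) by simp
  moreover have "monom u1 2 - monom u2 2 = monom (u1 - u2) 2" by (simp add: diff_monom)
  moreover have "monom (u1 - u2) (2::nat) \<noteq> 0" using assms(3) by simp
  ultimately have "h = 0" by simp
  with assms(1) show ?thesis by simp
qed

lemma less6: "(k::nat) < 6 \<longleftrightarrow> k = 0 \<or> k = 1 \<or> k = 2 \<or> k = 3 \<or> k = 4 \<or> k = 5" by auto

lemma crit6:
  fixes g :: "nat \<Rightarrow> complex poly"
  assumes d: "d = 3 * t + 1"
  and z1: "(\<Sum>k<6. pcompose (g k) X3 * monom (w1 ^ (k div 2) * u1 ^ (k mod 2)) (d * (k div 2) + 6 * (k mod 2))) = 0"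
  and z2: "(\<Sum>k<6. pcompose (g k) X3 * monom (w2 ^ (k div 2) * u2 ^ (k mod 2)) (d * (k div 2) + 6 * (k mod 2))) = 0"
  and u: "u1 \<noteq> u2" and w1: "w1 \<noteq> 0" and w2: "w2 \<noteq> 0"
  shows "\<forall>k<6. g k = 0"
proof -
  have fac1: "g 2 * monom w t + g 3 * monom (w * u) (t + 2) = (g 2 + g 3 * monom u 2) * monom w t" for w u
    by (simp add: algebra_simps mult_monom)
  have fac2: "g 4 * monom (w^2) (2 * t) + g 5 * monom (w^2 * u) (2 * t + 2) = (g 4 + g 5 * monom u 2) * monom (w^2) (2 * t)" for w u
    by (simp add: algebra_simps mult_monom)
  have L: "g 0 + g 1 * monom u 2 = 0 \<and> g 2 + g 3 * monom u 2 = 0 \<and> g 4 + g 5 * monom u 2 = 0"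
    if z: "(\<Sum>k<6. pcompose (g k) X3 * monom (w ^ (k div 2) * u ^ (k mod 2)) (d * (k div 2) + 6 * (k mod 2))) = 0"
      and w: "w \<noteq> 0" for w u
  proof -
    have "pcompose (g 0 + g 1 * monom u 2) X3
      + monom 1 1 * pcompose ((g 2 + g 3 * monom u 2) * monom w t) X3
      + monom 1 2 * pcompose ((g 4 + g 5 * monom u 2) * monom (w^2) (2 * t)) X3 = 0"
      using z unfolding line_split[OF d] fac1 fac2 .
    from mod3_decomp[OF this] w show ?thesis by simp
  qed
  from L[OF z1 w1] L[OF z2 w2] u show ?thesis
    using pair_zero[of "g 0" "g 1" u1 u2] pair_zero[of "g 2" "g 3" u1 u2] pair_zero[of "g 4" "g 5" u1 u2]
    unfolding less6 by blast
qed

lemma rho_monomial: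
  assumes "rho s l V = monom u 6" "rho s l W = monom w d"
  shows "rho s l (W ^ i * V ^ j) = monom (w ^ i * u ^ j) (d * i + 6 * j)"
  using assms by (simp add: rho_mult rho_power monom_power mult_monom mult.commute)

lemma descent_step:
  fixes P Q W V :: "complex poly poly" and F :: "nat \<Rightarrow> complex poly poly"
  assumes P0: "P \<noteq> 0"
  and a1: "rho s1 l1 P = 0" "rho s1 l1 Q = X3" "rho s1 l1 V = monom u1 6" "rho s1 l1 W = monom w1 d"
  and a2: "rho s2 l2 P = 0" "rho s2 l2 Q = X3" "rho s2 l2 V = monom u2 6" "rho s2 l2 W = monom w2 d"
  and u: "u1 \<noteq> u2" and w1: "w1 \<noteq> 0" and w2: "w2 \<noteq> 0" and d: "d = 3 * t + 1"
  and z: "(\<Sum>k<6. ev P Q (F k) * (W ^ (k div 2) * V ^ (k mod 2))) = 0"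
  shows "\<exists>F'. (\<forall>k<6. F k = pCons 0 (F' k)) \<and> (\<Sum>k<6. ev P Q (F' k) * (W ^ (k div 2) * V ^ (k mod 2))) = 0"
proof -
  define g where "g k = coeff (F k) 0" for k
  have R: "(\<Sum>k<6. pcompose (g k) X3 * monom (w ^ (k div 2) * u ^ (k mod 2)) (d * (k div 2) + 6 * (k mod 2))) = 0"
    if "rho s l P = 0" "rho s l Q = X3" "rho s l V = monom u 6" "rho s l W = monom w d" for s l u w
  proof -
    have "0 = rho s l (\<Sum>k<6. ev P Q (F k) * (W ^ (k div 2) * V ^ (k mod 2)))" using z by simp
    also have "\<dots> = (\<Sum>k<6. pcompose (g k) X3 * monom (w ^ (k div 2) * u ^ (k mod 2)) (d * (k div 2) + 6 * (k mod 2)))"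
      unfolding rho_sum using that
      by (simp add: rho_mult rho_ev g_def rho_power monom_power mult_monom mult.commute)
    finally show ?thesis by simp
  qed
  have g0: "\<forall>k<6. g k = 0" by (rule crit6[OF d R[OF a1] R[OF a2] u w1 w2])
  have "\<forall>k. \<exists>q. F k = pCons (coeff (F k) 0) q"
  proof
    fix k
    obtain c q where "F k = pCons c q" by (cases "F k")
    thus "\<exists>q. F k = pCons (coeff (F k) 0) q" by auto
  qed
  then obtain F' where F': "\<forall>k. F k = pCons (coeff (F k) 0) (F' k)" by metis
  have Fk: "\<forall>k<6. F k = pCons 0 (F' k)" using F' g0 by (metis g_def)
  have "(\<Sum>k<6. ev P Q (F k) * (W ^ (k div 2) * V ^ (k mod 2)))
      = P * (\<Sum>k<6. ev P Q (F' k) * (W ^ (k div 2) * V ^ (k mod 2)))"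
    unfolding sum_distrib_left
    by (rule sum.cong) (simp_all add: Fk ev_pCons mult.assoc)
  with z P0 have "(\<Sum>k<6. ev P Q (F' k) * (W ^ (k div 2) * V ^ (k mod 2))) = 0" by simp
  with Fk show ?thesis by blast
qed

lemma descent6:
  fixes P Q W V :: "complex poly poly"
  assumes P0: "P \<noteq> 0"
  and a1: "rho s1 l1 P = 0" "rho s1 l1 Q = X3" "rho s1 l1 V = monom u1 6" "rho s1 l1 W = monom w1 d"
  and a2: "rho s2 l2 P = 0" "rho s2 l2 Q = X3" "rho s2 l2 V = monom u2 6" "rho s2 l2 W = monom w2 d"
  and u: "u1 \<noteq> u2" and w1: "w1 \<noteq> 0" and w2: "w2 \<noteq> 0" and d: "d = 3 * t + 1"
  shows "(\<Sum>k<6. ev P Q (F k) * (W ^ (k div 2) * V ^ (k mod 2))) = 0 \<Longrightarrow> \<forall>k<6. ev P Q (F k) = 0"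
proof -
  have "\<forall>F. (\<forall>k<6. degree (F k) \<le> N) \<longrightarrow> (\<Sum>k<6. ev P Q (F k) * (W ^ (k div 2) * V ^ (k mod 2))) = 0
     \<longrightarrow> (\<forall>k<6. ev P Q (F k) = 0)" for N
  proof (induct N)
    case 0
    show ?case
    proof (rule allI, intro impI)
      fix F :: "nat \<Rightarrow> complex poly poly"
      assume dg: "\<forall>k<6. degree (F k) \<le> 0" and z: "(\<Sum>k<6. ev P Q (F k) * (W ^ (k div 2) * V ^ (k mod 2))) = 0"
      obtain F' where Fk: "\<forall>k<6. F k = pCons 0 (F' k)"
        using descent_step[OF P0 a1 a2 u w1 w2 d z] by blast
      show "\<forall>k<6. ev P Q (F k) = 0"
      proof (intro allI impI)
        fix k :: nat assume k: "k < 6"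
        have "F' k = 0" using dg[rule_format, OF k] Fk[rule_format, OF k]
          by (cases "F' k = 0") (simp_all add: degree_pCons_eq_if)
        thus "ev P Q (F k) = 0" using Fk k by (simp add: ev_pCons)
      qed
    qed
  next
    case (Suc N)
    show ?case
    proof (rule allI, intro impI)
      fix F :: "nat \<Rightarrow> complex poly poly"
      assume dg: "\<forall>k<6. degree (F k) \<le> Suc N" and z: "(\<Sum>k<6. ev P Q (F k) * (W ^ (k div 2) * V ^ (k mod 2))) = 0"
      obtain F' where Fk: "\<forall>k<6. F k = pCons 0 (F' k)"
        and z': "(\<Sum>k<6. ev P Q (F' k) * (W ^ (k div 2) * V ^ (k mod 2))) = 0"
        using descent_step[OF P0 a1 a2 u w1 w2 d z] by blast
      have "\<forall>k<6. degree (F' k) \<le> N"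
      proof (intro allI impI)
        fix k :: nat assume k: "k < 6"
        show "degree (F' k) \<le> N" using dg[rule_format, OF k] Fk[rule_format, OF k]
          by (cases "F' k = 0") (simp_all add: degree_pCons_eq_if)
      qed
      with Suc z' have "\<forall>k<6. ev P Q (F' k) = 0" by blast
      thus "\<forall>k<6. ev P Q (F k) = 0" using Fk by (simp add: ev_pCons)
    qed
  qed
  moreover assume "(\<Sum>k<6. ev P Q (F k) * (W ^ (k div 2) * V ^ (k mod 2))) = 0"
  moreover have "\<forall>k<6. degree (F k) \<le> Max ((\<lambda>k. degree (F k)) ` {..<6})" by simp
  ultimately show ?thesis by blast
qed

lemma subalg_power: "p \<in> subalg G \<Longrightarrow> p ^ n \<in> subalg G"
proof (induct n)
  case 0
  have "cst 1 \<in> subalg G" by (rule subalg.const)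
  thus ?case by simp
next
  case (Suc n)
  thus ?case by (simp add: subalg.mult)
qed

lemma choose_c:
  fixes A1 B1 A2 B2 :: complex
  assumes "A1 \<noteq> 0 \<or> B1 \<noteq> 0" "A2 \<noteq> 0 \<or> B2 \<noteq> 0"
  shows "\<exists>c. A1 + c * B1 \<noteq> 0 \<and> A2 + c * B2 \<noteq> 0"
proof (rule ccontr)
  assume "\<not> ?thesis"
  hence h: "\<And>c. A1 + c * B1 = 0 \<or> A2 + c * B2 = 0" by blast
  from h[of 0] h[of 1] h[of 2] assms show False
    by (auto simp: algebra_simps) (simp_all add: eq_neg_iff_add_eq_0[symmetric])
qed

context
  fixes a b :: complex
  assumes ha: "a \<notin> {0, -1}" and hb: "b \<notin> {0, -1}" and hab: "a + b \<notin> {0, -1}"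
    and hne: "a \<noteq> b" and ha1: "a \<noteq> 1" and hb1: "b \<noteq> 1"
begin

lemmas H = ha hb hab hne ha1 hb1

lemma cube_root: "c \<noteq> 0 \<Longrightarrow> \<exists>s::complex. s ^ 3 = c"
proof -
  assume c: "c \<noteq> 0"
  have "card {z::complex. z ^ 3 = c} = 3" by (rule card_nth_roots[OF c]) simp
  hence "{z::complex. z ^ 3 = c} \<noteq> {}" by (metis card.empty zero_neq_numeral)
  thus ?thesis by blast
qed

lemma line_data:
  assumes q: "sig a b l 2 = 0"
  shows "\<exists>s. s \<noteq> 0 \<and> rho s l (Pgen a b 2) = 0 \<and> rho s l (Pgen a b 3) = X3
          \<and> s ^ 3 * sig a b l 3 = 1"
proof -
  have n: "sig a b l 3 \<noteq> 0" by (rule sig3_nz[OF H q])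
  obtain s where s: "s ^ 3 = 1 / sig a b l 3" using cube_root[of "1 / sig a b l 3"] n by auto
  have s1: "s ^ 3 * sig a b l 3 = 1" using s n by simp
  hence "s \<noteq> 0" by auto
  moreover have "rho s l (Pgen a b 2) = 0" by (simp add: rho_Pgen q)
  moreover have "rho s l (Pgen a b 3) = X3" by (simp add: rho_Pgen s1 mult.commute)
  ultimately show ?thesis using s1 by blast
qed

lemma lower_bound:
  "\<exists>vs. length vs = 6 \<and> set vs \<subseteq> R_ab a b \<and> lin_indep_over (A_ab a b) vs"
proof -
  obtain l1 l2 where ne: "l1 \<noteq> l2" and q1: "sig a b l1 2 = 0" and q2: "sig a b l2 2 = 0"
    and vs: "(b + b^2) * (l1 + l2) = - 2 * a * b" and vp: "(b + b^2) * (l1 * l2) = a + a^2"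
    using roots[OF H] by blast
  obtain s1 where s1: "s1 \<noteq> 0" "rho s1 l1 (Pgen a b 2) = 0" "rho s1 l1 (Pgen a b 3) = X3"
    "s1 ^ 3 * sig a b l1 3 = 1" using line_data[OF q1] by blast
  obtain s2 where s2: "s2 \<noteq> 0" "rho s2 l2 (Pgen a b 2) = 0" "rho s2 l2 (Pgen a b 3) = X3"
    "s2 ^ 3 * sig a b l2 3 = 1" using line_data[OF q2] by blast
  define u1 where "u1 = sig a b l1 6 * s1 ^ 6"
  define u2 where "u2 = sig a b l2 6 * s2 ^ 6"
  have u: "u1 \<noteq> u2"
  proof
    assume eq: "u1 = u2"
    have k1: "u1 * (sig a b l1 3)^2 = sig a b l1 6 * (s1 ^ 3 * sig a b l1 3)^2"
      by (simp add: u1_def power2_eq_square power_add[symmetric] mult_ac)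
    have k2: "u2 * (sig a b l2 3)^2 = sig a b l2 6 * (s2 ^ 3 * sig a b l2 3)^2"
      by (simp add: u2_def power2_eq_square power_add[symmetric] mult_ac)
    have "sig a b l1 6 * (sig a b l2 3)^2 = u1 * (sig a b l1 3)^2 * (sig a b l2 3)^2"
      using k1 s1(4) by simp
    also have "\<dots> = u2 * (sig a b l2 3)^2 * (sig a b l1 3)^2" using eq by (simp add: mult_ac)
    also have "\<dots> = sig a b l2 6 * (sig a b l1 3)^2" using k2 s2(4) by simp
    finally show False using sig6_distinct[OF H ne q1 q2 vs vp] by simp
  qed
  have AB: "s ^ 3 * sig a b l 7 \<noteq> 0 \<or> sig a b l 4 \<noteq> 0" if "s \<noteq> 0" "sig a b l 2 = 0" for s l
    using sig7_nz[OF H that(2)] that(1) by auto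
  obtain c where c1: "s1 ^ 3 * sig a b l1 7 + c * sig a b l1 4 \<noteq> 0"
    and c2: "s2 ^ 3 * sig a b l2 7 + c * sig a b l2 4 \<noteq> 0"
    using choose_c[OF AB[OF s1(1) q1] AB[OF s2(1) q2]] by blast
  define W where "W = Pgen a b 7 + cst c * Pgen a b 3 * Pgen a b 4"
  define V where "V = Pgen a b 6"
  define w1 where "w1 = sig a b l1 7 * s1 ^ 7 + c * (sig a b l1 4 * s1 ^ 4)"
  define w2 where "w2 = sig a b l2 7 * s2 ^ 7 + c * (sig a b l2 4 * s2 ^ 4)"
  have rW: "rho s l W = monom (sig a b l 7 * s ^ 7 + c * (sig a b l 4 * s ^ 4)) 7"
    if "rho s l (Pgen a b 3) = X3" for s l
    using that by (simp add: W_def rho_add rho_mult rho_Pgen mult_monom smult_monom add_monom)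
  have rV: "rho s l V = monom (sig a b l 6 * s ^ 6) 6" for s l by (simp add: V_def rho_Pgen)
  have w1: "w1 \<noteq> 0"
  proof -
    have "w1 = s1 ^ 4 * (s1 ^ 3 * sig a b l1 7 + c * sig a b l1 4)"
      by (simp add: w1_def algebra_simps power_add[symmetric])
    thus ?thesis using c1 s1(1) by simp
  qed
  have w2: "w2 \<noteq> 0"
  proof -
    have "w2 = s2 ^ 4 * (s2 ^ 3 * sig a b l2 7 + c * sig a b l2 4)"
      by (simp add: w2_def algebra_simps power_add[symmetric])
    thus ?thesis using c2 s2(1) by simp
  qed
  have P0: "Pgen a b 2 \<noteq> 0"
  proof (rule P2_nz)
    have "a + a^2 = a * (1 + a)" by (simp add: power2_eq_square algebra_simps)
    moreover have "1 + a \<noteq> 0" using ha by (auto simp: add_eq_0_iff)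
    ultimately show "a + a^2 \<noteq> 0" using ha by simp
  qed
  have D: "(\<Sum>k<6. ev (Pgen a b 2) (Pgen a b 3) (F k) * (W ^ (k div 2) * V ^ (k mod 2))) = 0
     \<Longrightarrow> \<forall>k<6. ev (Pgen a b 2) (Pgen a b 3) (F k) = 0" for F
    by (rule descent6[OF P0 s1(2,3) rV rW[OF s1(3)] s2(2,3) rV rW[OF s2(3)], folded u1_def u2_def w1_def w2_def,
          OF u w1 w2, of 2]) simp_all
  define vs where "vs = map (\<lambda>k. W ^ (k div 2) * V ^ (k mod 2)) [0..<6]"
  have len: "length vs = 6" by (simp add: vs_def)
  have gens: "Pgen a b i \<in> R_ab a b" if "i \<ge> 2" for i
    unfolding R_ab_def by (rule subalg.gen) (use that in blast)
  have WR: "W \<in> R_ab a b" unfolding W_def R_ab_def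
    by (intro subalg.add subalg.mult subalg.const subalg.gen) auto
  have VR: "V \<in> R_ab a b" unfolding V_def by (rule gens) simp
  have setR: "set vs \<subseteq> R_ab a b"
    unfolding vs_def R_ab_def using WR VR unfolding R_ab_def
    by (auto intro!: subalg.mult subalg_power)
  have indep: "lin_indep_over (A_ab a b) vs"
    unfolding lin_indep_over_def
  proof (intro allI impI)
    fix cs assume lc: "length cs = length vs" and sc: "set cs \<subseteq> A_ab a b"
      and z: "(\<Sum>i<length vs. cs ! i * vs ! i) = 0"
    have "\<forall>i. \<exists>F. i < 6 \<longrightarrow> cs ! i = ev (Pgen a b 2) (Pgen a b 3) F"
    proof
      fix i
      show "\<exists>F. i < 6 \<longrightarrow> cs ! i = ev (Pgen a b 2) (Pgen a b 3) F"
      proof (cases "i < 6")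
        case True
        hence "cs ! i \<in> A_ab a b" using sc lc len by (auto simp: set_conv_nth)
        thus ?thesis unfolding A_ab_def using subalg_range_ev by blast
      qed simp
    qed
    then obtain F where F: "\<forall>i<6. cs ! i = ev (Pgen a b 2) (Pgen a b 3) (F i)" by metis
    have "(\<Sum>k<6. ev (Pgen a b 2) (Pgen a b 3) (F k) * (W ^ (k div 2) * V ^ (k mod 2))) = 0"
      using z len F by (simp add: vs_def)
    from D[OF this] F have "\<forall>i<6. cs ! i = 0" by simp
    thus "\<forall>c\<in>set cs. c = 0" using lc len by (auto simp: set_conv_nth)
  qed
  show ?thesis using len setR indep by blast
qed

end

definition tdle :: "nat \<Rightarrow> complex poly poly \<Rightarrow> bool" where
  "tdle M f \<longleftrightarrow> (\<forall>j. coeff f j \<noteq> 0 \<longrightarrow> j + degree (coeff f j) \<le> M)"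

lemma tdle_mono: "tdle M f \<Longrightarrow> M \<le> M' \<Longrightarrow> tdle M' f"
  unfolding tdle_def by force

lemma tdle_0[simp]: "tdle M 0" by (simp add: tdle_def)

lemma tdle_add: "tdle M f \<Longrightarrow> tdle M g \<Longrightarrow> tdle M (f + g)"
  unfolding tdle_def
proof (intro allI impI)
  fix j
  assume f: "\<forall>j. coeff f j \<noteq> 0 \<longrightarrow> j + degree (coeff f j) \<le> M"
    and g: "\<forall>j. coeff g j \<noteq> 0 \<longrightarrow> j + degree (coeff g j) \<le> M"
    and nz: "coeff (f + g) j \<noteq> 0"
  have d: "degree (coeff (f + g) j) \<le> max (degree (coeff f j)) (degree (coeff g j))"
    by (simp add: degree_add_le_max)
  show "j + degree (coeff (f + g) j) \<le> M"
  proof (cases "coeff f j = 0")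
    case True
    thus ?thesis using g nz by auto
  next
    case False
    note F = f[rule_format, OF False]
    show ?thesis
    proof (cases "coeff g j = 0")
      case True
      thus ?thesis using F by simp
    next
      case False
      thus ?thesis using F g d by fastforce
    qed
  qed
qed

lemma tdle_uminus: "tdle M f \<Longrightarrow> tdle M (- f)"
  unfolding tdle_def by simp

lemma tdle_diff: "tdle M f \<Longrightarrow> tdle M g \<Longrightarrow> tdle M (f - g)"
  using tdle_add[of M f "- g"] tdle_uminus[of M g] by simp

lemma tdle_sum: "(\<And>x. x \<in> A \<Longrightarrow> tdle M (h x)) \<Longrightarrow> tdle M (sum h A)"
  by (induct A rule: infinite_finite_induct) (simp_all add: tdle_add)

lemma degree_sum_le_bound:
  fixes h :: "nat \<Rightarrow> complex poly"
  assumes "\<And>x. x \<in> A \<Longrightarrow> h x = 0 \<or> degree (h x) \<le> B"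
  shows "degree (sum h A) \<le> B"
  using assms
proof (induct A rule: infinite_finite_induct)
  case (insert x F)
  then show ?case
    by (metis (no_types, lifting) add.left_neutral degree_add_le insert_iff sum.insert degree_0 le0)
qed simp_all

lemma tdle_mult: "tdle M f \<Longrightarrow> tdle N g \<Longrightarrow> tdle (M + N) (f * g)"
proof -
  assume f: "tdle M f" and g: "tdle N g"
  show ?thesis unfolding tdle_def
  proof (intro allI impI)
    fix j assume nz: "coeff (f * g) j \<noteq> 0"
    have c: "coeff (f * g) j = (\<Sum>i\<le>j. coeff f i * coeff g (j - i))" by (rule coeff_mult)
    have "degree (\<Sum>i\<le>j. coeff f i * coeff g (j - i)) \<le> M + N - j"
    proof (rule degree_sum_le_bound)
      fix i assume i: "i \<in> {..j}"
      show "coeff f i * coeff g (j - i) = 0 \<or> degree (coeff f i * coeff g (j - i)) \<le> M + N - j"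
      proof (cases "coeff f i = 0 \<or> coeff g (j - i) = 0")
        case False
        hence "i + degree (coeff f i) \<le> M" "(j - i) + degree (coeff g (j - i)) \<le> N"
          using f g unfolding tdle_def by auto
        moreover have "degree (coeff f i * coeff g (j - i)) = degree (coeff f i) + degree (coeff g (j - i))"
          using False by (simp add: degree_mult_eq)
        ultimately show ?thesis using i by auto
      qed auto
    qed
    moreover have "j \<le> M + N"
    proof (rule ccontr)
      assume nj: "\<not> j \<le> M + N"
      have "coeff f i * coeff g (j - i) = 0" if i: "i \<le> j" for i
      proof (rule ccontr)
        assume "coeff f i * coeff g (j - i) \<noteq> 0"
        hence "coeff f i \<noteq> 0" "coeff g (j - i) \<noteq> 0" by auto
        hence "i \<le> M" "j - i \<le> N" using f g unfolding tdle_def by fastforce+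
        with i nj show False by linarith
      qed
      hence "(\<Sum>i\<le>j. coeff f i * coeff g (j - i)) = 0" by (intro sum.neutral) auto
      with nz c show False by simp
    qed
    ultimately have "j + degree (\<Sum>i\<le>j. coeff f i * coeff g (j - i)) \<le> M + N" by linarith
    thus "j + degree (coeff (f * g) j) \<le> M + N" by (simp only: c)
  qed
qed

lemma tdle_power: "tdle M f \<Longrightarrow> tdle (n * M) (f ^ n)"
proof (induct n)
  case 0
  then show ?case by (simp add: tdle_def coeff_1)
next
  case (Suc n)
  then show ?case using tdle_mult[of M f "n * M" "f ^ n"] by simp
qed

lemma tdle_cst: "tdle 0 (cst c)" by (simp add: tdle_def cst_def coeff_pCons split: nat.splits)
lemma tdle_varX: "tdle 1 varX" by (simp add: tdle_def varX_def coeff_pCons split: nat.splits)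
lemma tdle_varY: "tdle 1 varY" by (simp add: tdle_def varY_def coeff_pCons split: nat.splits)

lemma tdle_Pgen: "tdle i (Pgen a b i)"
proof -
  have x: "tdle 1 (cst a * varX)" using tdle_mult[OF tdle_cst tdle_varX] by simp
  have y: "tdle 1 (cst b * varY)" using tdle_mult[OF tdle_cst tdle_varY] by simp
  have "tdle (0 + i * 1) (cst a * varX ^ i)" by (rule tdle_mult[OF tdle_cst tdle_power[OF tdle_varX]])
  moreover have "tdle (0 + i * 1) (cst b * varY ^ i)" by (rule tdle_mult[OF tdle_cst tdle_power[OF tdle_varY]])
  moreover have "tdle (i * 1) ((- (cst a * varX) - cst b * varY) ^ i)"
    by (rule tdle_power[OF tdle_diff[OF tdle_uminus[OF x] y]])
  ultimately show ?thesis unfolding Pgen_def by (simp add: tdle_add)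
qed

lemma tdle_exists: "\<exists>M. tdle M f"
proof -
  define M where "M = (\<Sum>j\<le>degree f. j + degree (coeff f j))"
  have "tdle M f" unfolding tdle_def
  proof (intro allI impI)
    fix j assume "coeff f j \<noteq> 0"
    hence "j \<le> degree f" by (rule le_degree)
    thus "j + degree (coeff f j) \<le> M" unfolding M_def
      by (intro member_le_sum[where f = "\<lambda>j. j + degree (coeff f j)"]) auto
  qed
  thus ?thesis by blast
qed

interpretation CV: vector_space "\<lambda>(c::complex) (f::complex poly poly). cst c * f"
  by unfold_locales (simp_all add: algebra_simps cst_add cst_mult)

definition mon :: "nat \<times> nat \<Rightarrow> complex poly poly" where
  "mon p = monom (monom 1 (fst p)) (snd p)"

definition Bset :: "nat \<Rightarrow> (nat \<times> nat) set" where
  "Bset M = {p. fst p + snd p \<le> M}"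

lemma monom_sum: "monom (sum h A) j = (\<Sum>x\<in>A. monom (h x) j)"
  by (induct A rule: infinite_finite_induct) (simp_all add: add_monom[symmetric])

lemma cst_mon: "cst c * mon (i, j) = monom (monom c i) j"
  by (simp add: cst_def mon_def smult_monom[symmetric] smult_monom)

lemma span_mon:
  assumes "tdle M f"
  shows "f \<in> CV.span (mon ` Bset M)"
proof -
  have "f = (\<Sum>j\<le>degree f. monom (coeff f j) j)" by (simp add: poly_as_sum_of_monoms)
  also have "\<dots> \<in> CV.span (mon ` Bset M)"
  proof (rule CV.span_sum)
    fix j assume "j \<in> {..degree f}"
    show "monom (coeff f j) j \<in> CV.span (mon ` Bset M)"
    proof (cases "coeff f j = 0")
      case True
      thus ?thesis by (simp add: CV.span_zero)
    next
      case False
      with assms have jM: "j + degree (coeff f j) \<le> M" unfolding tdle_def by blast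
      have "monom (coeff f j) j = monom (\<Sum>i\<le>degree (coeff f j). monom (coeff (coeff f j) i) i) j"
        by (simp add: poly_as_sum_of_monoms)
      also have "\<dots> = (\<Sum>i\<le>degree (coeff f j). cst (coeff (coeff f j) i) * mon (i, j))"
        by (simp add: monom_sum cst_mon)
      also have "\<dots> \<in> CV.span (mon ` Bset M)"
      proof (rule CV.span_sum)
        fix i assume "i \<in> {..degree (coeff f j)}"
        hence "(i, j) \<in> Bset M" using jM by (auto simp: Bset_def)
        hence "mon (i, j) \<in> CV.span (mon ` Bset M)" by (intro CV.span_base) blast
        thus "cst (coeff (coeff f j) i) * mon (i, j) \<in> CV.span (mon ` Bset M)"
          by (rule CV.span_scale)
      qed
      finally show ?thesis .
    qed
  qed
  finally show ?thesis .
qed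

lemma Bset_Suc: "Bset (Suc M) = Bset M \<union> (\<lambda>i. (i, Suc M - i)) ` {..Suc M}"
  by (auto simp: Bset_def image_iff intro!: bexI[of _ "fst p" for p])

lemma card_Bset: "2 * card (Bset M) = (M + 1) * (M + 2)"
proof (induct M)
  case 0
  have "Bset 0 = {(0, 0)}" by (auto simp: Bset_def)
  thus ?case by simp
next
  case (Suc M)
  have fin: "finite (Bset M)" unfolding Bset_def
    by (rule finite_subset[of _ "{..M} \<times> {..M}"]) auto
  have disj: "Bset M \<inter> (\<lambda>i. (i, Suc M - i)) ` {..Suc M} = {}" by (auto simp: Bset_def)
  have inj: "inj_on (\<lambda>i. (i, Suc M - i)) {..Suc M}" by (auto intro: inj_onI)
  have "card (Bset (Suc M)) = card (Bset M) + (M + 2)"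
    unfolding Bset_Suc using fin disj inj by (simp add: card_Un_disjoint card_image)
  thus ?case using Suc by (simp add: algebra_simps)
qed

lemma finite_Bset: "finite (Bset M)"
  unfolding Bset_def by (rule finite_subset[of _ "{..M} \<times> {..M}"]) auto

lemma ev_1: "ev P Q 1 = 1"
proof -
  have "ev P Q 1 = ev P Q [:1:]" by (simp add: one_pCons)
  also have "\<dots> = 1" by (simp add: ev_const)
  finally show ?thesis .
qed

lemma ev_power: "ev P Q (F ^ n) = ev P Q F ^ n"
  by (induct n) (simp_all add: ev_mult ev_1)

lemma monom_as_mult: "monom g i = [:g:] * [:0, 1:] ^ i"
  by (simp add: monom_altdef)

lemma evY_power: "evY Q (g ^ n) = evY Q g ^ n"
  by (induct n) (simp_all add: evY_mult one_pCons[symmetric])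

lemma ev_monom2: "ev P Q (monom (monom c n) i) = cst c * Q ^ n * P ^ i"
proof -
  have X: "ev P Q [:0, 1:] = P" by (simp add: ev_pCons ev_const)
  have 1: "ev P Q (monom (monom c n) i) = evY Q (monom c n) * P ^ i"
    by (simp only: monom_as_mult[of "monom c n" i] ev_mult ev_power ev_const X)
  have 2: "evY Q (monom c n) = cst c * Q ^ n"
    by (simp only: monom_as_mult[of c n] evY_mult evY_power evY_X evY_const)
  show ?thesis by (simp add: 1 2)
qed

lemma subalg_power': "p \<in> subalg G \<Longrightarrow> p ^ n \<in> subalg G"
proof (induct n)
  case 0
  have "cst 1 \<in> subalg G" by (rule subalg.const)
  thus ?case by simp
next
  case (Suc n)
  thus ?case by (simp add: subalg.mult)
qed

lemma ev_sum: "ev P Q (sum h A) = (\<Sum>x\<in>A. ev P Q (h x))"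
  by (induct A rule: infinite_finite_induct) (simp_all add: ev_add)

lemma subalg_sum: "(\<And>x. x \<in> A \<Longrightarrow> h x \<in> subalg G) \<Longrightarrow> sum h A \<in> subalg G"
proof (induct A rule: infinite_finite_induct)
  case (infinite A)
  have "cst 0 \<in> subalg G" by (rule subalg.const)
  thus ?case using infinite by simp
next
  case empty
  have "cst 0 \<in> subalg G" by (rule subalg.const)
  thus ?case by simp
next
  case (insert x F)
  thus ?case by (simp add: subalg.add)
qed

lemma gsum: "(\<Sum>j\<le>2 * K. 3 * j div 2 + 1) = 3 * K^2 + 3 * K + (1::nat)"
proof (induct K)
  case 0 then show ?case by simp
next
  case (Suc K)
  have "2 * Suc K = Suc (Suc (2 * K))" by simp
  hence "(\<Sum>j\<le>2 * Suc K. 3 * j div 2 + 1) = (\<Sum>j\<le>2 * K. 3 * j div 2 + 1)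
     + (3 * Suc (2 * K) div 2 + 1) + (3 * Suc (Suc (2 * K)) div 2 + 1)" by simp
  also have "3 * Suc (2 * K) div 2 = 3 * K + 1" by presburger
  also have "3 * Suc (Suc (2 * K)) div 2 = 3 * K + 3" by presburger
  finally show ?case using Suc by (simp add: power2_eq_square algebra_simps)
qed

definition Iset :: "nat \<Rightarrow> (nat \<times> nat) set" where
  "Iset K = (SIGMA j:{..2 * K}. {..3 * j div 2})"

lemma finite_Iset: "finite (Iset K)" by (simp add: Iset_def)

lemma card_Iset: "card (Iset K) = 3 * K^2 + 3 * K + 1"
  unfolding Iset_def using gsum[of K] by (simp add: card_SigmaI)

context
  fixes P Q :: "complex poly poly"
  assumes inj: "\<And>F. ev P Q F = 0 \<Longrightarrow> F = 0"
begin

definition phi :: "nat \<Rightarrow> nat \<times> nat \<Rightarrow> complex poly poly" where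
  "phi K p = P ^ snd p * Q ^ (2 * K - fst p)"

definition psi :: "complex poly poly list \<Rightarrow> nat \<Rightarrow> nat \<times> nat \<times> nat \<Rightarrow> complex poly poly" where
  "psi vs K t = phi K (snd t) * vs ! fst t"

lemma scalars_zero:
  assumes li: "lin_indep_over (subalg {P, Q}) vs"
  and z: "(\<Sum>t\<in>{..<length vs} \<times> Iset K. cst (u t) * psi vs K t) = 0"
  shows "\<forall>t\<in>{..<length vs} \<times> Iset K. u t = 0"
proof -
  define m where "m = length vs"
  define c where "c k = (\<Sum>p\<in>Iset K. cst (u (k, p)) * phi K p)" for k
  have zc: "(\<Sum>k<m. c k * vs ! k) = 0"
  proof -
    have "(\<Sum>k<m. c k * vs ! k) = (\<Sum>k<m. \<Sum>p\<in>Iset K. cst (u (k, p)) * psi vs K (k, p))"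
      by (simp add: c_def sum_distrib_right psi_def mult.assoc)
    also have "\<dots> = (\<Sum>t\<in>{..<m} \<times> Iset K. cst (u t) * psi vs K t)"
      by (simp add: sum.cartesian_product)
    finally show ?thesis using z by (simp add: m_def)
  qed
  have cA: "c k \<in> subalg {P, Q}" for k
    unfolding c_def phi_def
    by (intro subalg_sum subalg.mult subalg.const subalg_power' subalg.gen) auto
  define cs where "cs = map c [0..<m]"
  have "\<forall>x\<in>set cs. x = 0"
    using li unfolding lin_indep_over_def
  proof (elim allE impE)
    show "length cs = length vs" by (simp add: cs_def m_def)
    show "set cs \<subseteq> subalg {P, Q}" using cA by (auto simp: cs_def)
    show "(\<Sum>i<length vs. cs ! i * vs ! i) = 0" using zc by (simp add: cs_def m_def)
  qed
  hence c0: "c k = 0" if "k < m" for k using that by (auto simp: cs_def)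
  show ?thesis
  proof
    fix t assume t: "t \<in> {..<length vs} \<times> Iset K"
    obtain k j i where tt: "t = (k, (j, i))" by (cases t) auto
    have k: "k < m" and ji: "(j, i) \<in> Iset K" using t tt by (auto simp: m_def)
    define G where "G = (\<Sum>p\<in>Iset K. monom (monom (u (k, p)) (2 * K - fst p)) (snd p))"
    have "ev P Q G = c k"
      by (simp add: G_def c_def ev_sum ev_monom2 phi_def mult_ac)
    hence "G = 0" using c0[OF k] inj by simp
    hence "0 = coeff (coeff G i) (2 * K - j)" by simp
    also have "\<dots> = (\<Sum>p\<in>Iset K. if (j, i) = p then u (k, p) else 0)"
      unfolding G_def coeff_sum
    proof (rule sum.cong)
      fix p assume p: "p \<in> Iset K"
      have "fst p \<le> 2 * K" "j \<le> 2 * K" using p ji by (auto simp: Iset_def)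
      hence "(snd p = i \<and> 2 * K - fst p = 2 * K - j) \<longleftrightarrow> (j, i) = p" by (cases p) auto
      thus "coeff (coeff (monom (monom (u (k, p)) (2 * K - fst p)) (snd p)) i) (2 * K - j)
          = (if (j, i) = p then u (k, p) else 0)"
        by (auto simp: coeff_monom)
    qed simp
    also have "\<dots> = u (k, (j, i))" using ji finite_Iset by (simp add: sum.delta)
    finally show "u t = 0" by (simp add: tt)
  qed
qed

lemma cst_minus: "cst (- c) = - cst c" by (simp add: cst_def)

lemma arith_contra:
  fixes m D :: nat
  assumes m: "m \<ge> 7"
  and le: "2 * (m * (3 * (3 * D + 3)^2 + 3 * (3 * D + 3) + 1)) \<le> (6 * (3 * D + 3) + D + 1) * (6 * (3 * D + 3) + D + 2)"
  shows False
proof -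
  have "7 * (3 * (3 * D + 3)^2 + 3 * (3 * D + 3) + 1) \<le> m * (3 * (3 * D + 3)^2 + 3 * (3 * D + 3) + 1)"
    using m by (rule mult_le_mono1)
  hence "2 * (7 * (3 * (3 * D + 3)^2 + 3 * (3 * D + 3) + 1)) \<le> 2 * (m * (3 * (3 * D + 3)^2 + 3 * (3 * D + 3) + 1))"
    by (rule mult_le_mono2)
  with le have "2 * (7 * (3 * (3 * D + 3)^2 + 3 * (3 * D + 3) + 1)) \<le> (6 * (3 * D + 3) + D + 1) * (6 * (3 * D + 3) + D + 2)"
    by linarith
  thus False by (simp add: power2_eq_square algebra_simps)
qed

lemma length_le6:
  assumes tP: "tdle 2 P" and tQ: "tdle 3 Q" and li: "lin_indep_over (subalg {P, Q}) vs"
  shows "length vs \<le> 6"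
proof (rule ccontr)
  assume "\<not> length vs \<le> 6"
  define m where "m = length vs"
  have m7: "m \<ge> 7" using \<open>\<not> length vs \<le> 6\<close> by (simp add: m_def)
  have "\<forall>k. \<exists>M. tdle M (vs ! k)" using tdle_exists by blast
  then obtain Mf where Mf: "\<forall>k. tdle (Mf k) (vs ! k)" by metis
  define D where "D = (\<Sum>k<m. Mf k)"
  have tv: "tdle D (vs ! k)" if "k < m" for k
    using Mf tdle_mono that unfolding D_def
    by (metis finite_lessThan lessThan_iff member_le_sum zero_le)
  define K where "K = 3 * D + 3"
  define T where "T = {..<m} \<times> Iset K"
  define M where "M = 6 * K + D"
  have finT: "finite T" by (simp add: T_def finite_Iset)
  have sz: "\<forall>t\<in>T. u t = 0" if "(\<Sum>t\<in>T. cst (u t) * psi vs K t) = 0" for u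
    using scalars_zero[OF li, where K=K and u=u] that by (simp add: T_def m_def)
  have injT: "inj_on (psi vs K) T"
  proof (rule inj_onI, rule ccontr)
    fix t1 t2 assume t1: "t1 \<in> T" and t2: "t2 \<in> T" and eq: "psi vs K t1 = psi vs K t2" and ne: "t1 \<noteq> t2"
    define u where "u t = (if t = t1 then 1 else if t = t2 then - 1 else (0::complex))" for t
    have "(\<Sum>t\<in>T. cst (u t) * psi vs K t)
       = (\<Sum>t\<in>T. (if t1 = t then psi vs K t1 else 0) + (if t2 = t then - psi vs K t2 else 0))"
      using ne by (intro sum.cong) (auto simp: u_def cst_minus)
    also have "\<dots> = psi vs K t1 - psi vs K t2"
      using t1 t2 finT by (simp add: sum.distrib sum.delta)
    also have "\<dots> = 0" using eq by simp
    finally have "\<forall>t\<in>T. u t = 0" by (rule sz)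
    hence "u t1 = 0" using t1 by blast
    thus False by (simp add: u_def)
  qed
  have indep: "CV.independent (psi vs K ` T)"
  proof (rule CV.independent_if_scalars_zero)
    show "finite (psi vs K ` T)" using finT by simp
    fix f x
    assume s: "(\<Sum>x\<in>psi vs K ` T. cst (f x) * x) = 0" and x: "x \<in> psi vs K ` T"
    have "(\<Sum>t\<in>T. cst (f (psi vs K t)) * psi vs K t) = 0"
      using s by (simp add: sum.reindex[OF injT])
    hence "\<forall>t\<in>T. f (psi vs K t) = 0" by (rule sz)
    with x show "f x = 0" by auto
  qed
  have span: "psi vs K ` T \<subseteq> CV.span (mon ` Bset M)"
  proof
    fix x assume "x \<in> psi vs K ` T"
    then obtain k j i where k: "k < m" and ji: "(j, i) \<in> Iset K" and x: "x = psi vs K (k, (j, i))"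
      by (auto simp: T_def)
    have j: "j \<le> 2 * K" and i: "2 * i \<le> 3 * j" using ji by (auto simp: Iset_def)
    have "tdle (i * 2 + (2 * K - j) * 3) (phi K (j, i))"
      unfolding phi_def by (simp add: tdle_mult tdle_power tP tQ)
    moreover have "i * 2 + (2 * K - j) * 3 \<le> 6 * K" using i j by linarith
    ultimately have "tdle (6 * K) (phi K (j, i))" by (rule tdle_mono)
    hence "tdle (6 * K + D) x" using tv[OF k] by (simp add: x psi_def tdle_mult)
    thus "x \<in> CV.span (mon ` Bset M)" by (simp add: M_def span_mon)
  qed
  have "card (psi vs K ` T) \<le> card (mon ` Bset M)"
    using CV.independent_span_bound[OF _ indep span] finite_Bset by simp
  also have "\<dots> \<le> card (Bset M)" by (rule card_image_le[OF finite_Bset])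
  finally have c1: "card (psi vs K ` T) \<le> card (Bset M)" .
  have "card (psi vs K ` T) = m * (3 * K^2 + 3 * K + 1)"
    using card_image[OF injT] by (simp add: T_def card_cartesian_product card_Iset)
  with c1 card_Bset[of M] have "2 * (m * (3 * K^2 + 3 * K + 1)) \<le> (M + 1) * (M + 2)" by linarith
  thus False using arith_contra[OF m7] by (simp add: M_def K_def)
qed

end

theorem proposition5p8:
  fixes a b :: complex
  assumes "a \<notin> {0, -1}" and "b \<notin> {0, -1}" and "a + b \<notin> {0, -1}"
    and "a \<noteq> b" and "a \<noteq> 1" and "b \<noteq> 1"
  shows "has_rank_over (A_ab a b) (R_ab a b) 6"
proof -
  obtain l1 l2 where q1: "sig a b l1 2 = 0"
    using roots[OF assms] by blast
  obtain s1 where s1: "s1 \<noteq> 0" "rho s1 l1 (Pgen a b 2) = 0" "rho s1 l1 (Pgen a b 3) = X3"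
    using line_data[OF assms q1] by blast
  have P0: "Pgen a b 2 \<noteq> 0"
  proof (rule P2_nz)
    have "a + a^2 = a * (1 + a)" by (simp add: power2_eq_square algebra_simps)
    moreover have "1 + a \<noteq> 0" using assms(1) by (auto simp: add_eq_0_iff)
    ultimately show "a + a^2 \<noteq> 0" using assms(1) by simp
  qed
  have inj: "\<And>F. ev (Pgen a b 2) (Pgen a b 3) F = 0 \<Longrightarrow> F = 0"
    by (rule ev_inj[OF P0 s1(2,3)])
  show ?thesis
    unfolding has_rank_over_def
  proof (intro conjI allI impI)
    show "\<exists>vs. length vs = 6 \<and> set vs \<subseteq> R_ab a b \<and> lin_indep_over (A_ab a b) vs"
      by (rule lower_bound[OF assms])
    fix vs assume "set vs \<subseteq> R_ab a b" and li: "lin_indep_over (A_ab a b) vs"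
    show "length vs \<le> 6"
      by (rule length_le6[OF inj tdle_Pgen tdle_Pgen li[unfolded A_ab_def]])
  qed
qed

end
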